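(* Let $k_1 \le k$ be positive integers and let $d \ge 2$ be an integer. Let $\delta = \frac{97}{420}$ and $\phi = 1.86 - \frac{1}{2100}$. Let $\beta(k) = 0$ for $k = 0, \dots, 8$ and $\beta(k) = \frac{1}{3} - \delta$ for $k \ge 9$. Then $$-(k-1)\delta + \sum_{j=1}^{k-1}\left(\frac{2}{d+j} - \frac{1}{d}\right) + H_{k+1} \le \phi - \beta(k).$$
   Context: $H_n = \sum_{i=1}^n \frac{1}{i}$ denotes the $n$-th harmonic number (with $H_0 = 0$). *)

theory Defs
  imports "HOL-Analysis.Analysis"
begin

definition delta_const :: real where "delta_const = 97 / 420"
definition phi_const :: real where "phi_const = 1.86 - 1 / 2100"
definition beta :: "nat \<Rightarrow> real" where
  "beta k = (if k \<le> 8 then 0 else 1/3 - delta_const)"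

end

theory Submission
  imports Defs
begin

lemma term_bound:
  fixes d j :: real
  assumes "d \<ge> 1" "j \<ge> 1"
  shows "2 / (d + j) - 1 / d \<le> 1 / (5 * j)"
proof -
  have "0 \<le> (d - 2*j)^2 + j^2" by simp
  hence i: "5 * j * (2 * d) - 5 * j * (d + j) \<le> d * (d + j)"
    by (simp add: power2_eq_square algebra_simps)
  have e: "2 / (d + j) - 1 / d = (2 * d - (d + j)) / (d * (d + j))" using assms
    by (simp add: field_simps)
  have "(2 * d - (d + j)) / (d * (d + j)) \<le> 1 / (5 * j)" using assms i
  proof -
    have p1: "d * (d + j) > 0" "5 * j > 0" using assms by auto
    have "(2 * d - (d + j)) * (5 * j) \<le> d * (d + j)" using i by (simp add: algebra_simps)
    hence "(2 * d - (d + j)) \<le> (d * (d + j)) / (5 * j)" using p1 by (simp add: pos_le_divide_eq)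
    hence "(2 * d - (d + j)) \<le> 1 / (5 * j) * (d * (d + j))" by simp
    thus ?thesis using p1 by (simp add: pos_divide_le_eq)
  qed
  thus ?thesis using e by simp
qed

lemma term_bound2:
  fixes d j :: real
  assumes "d \<ge> 13" "j \<ge> 1"
  shows "2 / (d + j) - 1 / d \<le> 1 / 13"
proof -
  have "2 / (d + j) \<le> 2 / d" using assms by (intro divide_left_mono) auto
  hence "2 / (d + j) - 1 / d \<le> 1 / d" by simp
  also have "\<dots> \<le> 1/13" using assms by (simp add: field_simps)
  finally show ?thesis .
qed

lemma sum_bound1:
  fixes d k :: nat
  assumes "d \<ge> 2"
  shows "(\<Sum>j = 1..k - 1. 2 / (real d + real j) - 1 / real d) \<le> harm (k - 1) / 5"
proof -
  have "(\<Sum>j = 1..k - 1. 2 / (real d + real j) - 1 / real d) \<le> (\<Sum>j = 1..k - 1. 1 / (5 * real j))"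
    using assms by (intro sum_mono term_bound) auto
  also have "\<dots> = harm (k - 1) / 5"
    by (simp add: harm_def sum_divide_distrib field_simps)
  finally show ?thesis .
qed

lemma sum_bound2:
  fixes d k :: nat
  assumes "d \<ge> 13" "k \<ge> 1"
  shows "(\<Sum>j = 1..k - 1. 2 / (real d + real j) - 1 / real d) \<le> (real k - 1) / 13"
proof -
  have "(\<Sum>j = 1..k - 1. 2 / (real d + real j) - 1 / real d) \<le> (\<Sum>j = 1..k - 1. 1 / 13)"
    using assms by (intro sum_mono term_bound2) auto
  also have "\<dots> \<le> (real k - 1) / 13"
    using assms(2) by (cases k) auto
  finally show ?thesis .
qed

lemma big_k:
  fixes m :: nat
  assumes "m \<ge> 8"
  shows "- real m * delta_const + harm m / 5 + harm (m + 2) \<le> phi_const - beta (m + 1)"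
  using assms
proof (induction m rule: dec_induct)
  case base
  show ?case by (simp add: harm_expand delta_const_def phi_const_def beta_def)
next
  case (step m)
  have b: "beta (Suc m + 1) = beta (m + 1)" using step(1) by (simp add: beta_def)
  have h1: "harm (Suc m) = harm m + 1 / (real m + 1)" by (simp add: harm_Suc field_simps)
  have h2: "harm (Suc m + 2) = harm (m + 2) + 1 / (real m + 3)"
    by (simp add: harm_Suc field_simps)
  have a1: "1 / (real m + 1) \<le> 1 / 9" using step(1) by (simp add: field_simps)
  have a2: "1 / (real m + 3) \<le> 1 / 11" using step(1) by (simp add: field_simps)
  have "- real (Suc m) * delta_const + harm (Suc m) / 5 + harm (Suc m + 2)
     = (- real m * delta_const + harm m / 5 + harm (m + 2)) + (- delta_const + (1 / (real m + 1)) / 5 + 1 / (real m + 3))"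
    unfolding h1 h2 by (simp add: algebra_simps add_divide_distrib)
  moreover have "- delta_const + (1 / (real m + 1)) / 5 + 1 / (real m + 3) \<le> 0"
  proof -
    have "1 / (real m + 1) / 5 \<le> 1 / 45" using a1 by simp
    thus ?thesis unfolding delta_const_def using a2 by linarith
  qed
  ultimately show ?case using step(3) b by linarith
qed

lemma small_case:
  fixes k d :: nat
  assumes "2 \<le> d" "d \<le> 12" "3 \<le> k" "k \<le> 6"
  shows "- (real k - 1) * delta_const
         + (\<Sum>j = 1..k - 1. 2 / (real d + real j) - 1 / real d)
         + (harm (k + 1) :: real) \<le> phi_const - beta k"
proof -
  have dd: "d = 2 \<or> d = 3 \<or> d = 4 \<or> d = 5 \<or> d = 6 \<or> d = 7 \<or> d = 8 \<or> d = 9 \<or> d = 10 \<or> d = 11 \<or> d = 12"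
    using assms by presburger
  have kk: "k = 3 \<or> k = 4 \<or> k = 5 \<or> k = 6" using assms by presburger
  have c3: "k = 3 \<Longrightarrow> ?thesis"
  proof -
    assume kk: "k = 3"
    have e1: "(\<Sum>j = 1..k - 1. 2 / (real d + real j) - 1 / real d) = (2 / (real d + 1) - 1 / real d) + (2 / (real d + 2) - 1 / real d)"
      using kk by (simp add: numeral_eq_Suc)
    have e2: "harm (k + 1) = (25/12 :: real)" using kk by (simp add: harm_expand)
    have e3: "beta k = 0" "real k = 3" using kk by (auto simp: beta_def)
    show ?thesis unfolding e1 e2 e3 using dd
      by (elim disjE; simp add: delta_const_def phi_const_def)
  qed
  have c4: "k = 4 \<Longrightarrow> ?thesis"
  proof -
    assume kk: "k = 4"
    have e1: "(\<Sum>j = 1..k - 1. 2 / (real d + real j) - 1 / real d) = (2 / (real d + 1) - 1 / real d) + (2 / (real d + 2) - 1 / real d) + (2 / (real d + 3) - 1 / real d)"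
      using kk by (simp add: numeral_eq_Suc)
    have e2: "harm (k + 1) = (137/60 :: real)" using kk by (simp add: harm_expand)
    have e3: "beta k = 0" "real k = 4" using kk by (auto simp: beta_def)
    show ?thesis unfolding e1 e2 e3 using dd
      by (elim disjE; simp add: delta_const_def phi_const_def)
  qed
  have c5: "k = 5 \<Longrightarrow> ?thesis"
  proof -
    assume kk: "k = 5"
    have e1: "(\<Sum>j = 1..k - 1. 2 / (real d + real j) - 1 / real d) = (2 / (real d + 1) - 1 / real d) + (2 / (real d + 2) - 1 / real d) + (2 / (real d + 3) - 1 / real d) + (2 / (real d + 4) - 1 / real d)"
      using kk by (simp add: numeral_eq_Suc)
    have e2: "harm (k + 1) = (49/20 :: real)" using kk by (simp add: harm_expand)
    have e3: "beta k = 0" "real k = 5" using kk by (auto simp: beta_def)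
    show ?thesis unfolding e1 e2 e3 using dd
      by (elim disjE; simp add: delta_const_def phi_const_def)
  qed
  have c6: "k = 6 \<Longrightarrow> ?thesis"
  proof -
    assume kk: "k = 6"
    have e1: "(\<Sum>j = 1..k - 1. 2 / (real d + real j) - 1 / real d) = (2 / (real d + 1) - 1 / real d) + (2 / (real d + 2) - 1 / real d) + (2 / (real d + 3) - 1 / real d) + (2 / (real d + 4) - 1 / real d) + (2 / (real d + 5) - 1 / real d)"
      using kk by (simp add: numeral_eq_Suc)
    have e2: "harm (k + 1) = (363/140 :: real)" using kk by (simp add: harm_expand)
    have e3: "beta k = 0" "real k = 6" using kk by (auto simp: beta_def)
    show ?thesis unfolding e1 e2 e3 using dd
      by (elim disjE; simp add: delta_const_def phi_const_def)
  qed
  show ?thesis using kk c3 c4 c5 c6 by blast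
qed

theorem mainTheorem3:
  fixes k1 k d :: nat
  assumes "1 \<le> k1" and "k1 \<le> k" and "d \<ge> 2"
  shows "- (real k - 1) * delta_const
         + (\<Sum>j = 1..k - 1. 2 / (real d + real j) - 1 / real d)
         + (harm (k + 1) :: real) \<le> phi_const - beta k"
proof -
  have k1: "k \<ge> 1" using assms by simp
  let ?S = "(\<Sum>j = 1..k - 1. 2 / (real d + real j) - 1 / real d)"
  consider "k \<le> 2" | "k = 7" | "k = 8" | "k \<ge> 9" | "3 \<le> k \<and> k \<le> 6" by linarith
  then show ?thesis
  proof cases
    case 1
    have "?S \<le> harm (k - 1) / 5" using sum_bound1 assms(3) by blast
    moreover have "k = 1 \<or> k = 2" using 1 k1 by linarith
    ultimately show ?thesis
      by (auto simp: harm_expand harm_Suc delta_const_def phi_const_def beta_def)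
  next
    case 2
    have "?S \<le> harm (k - 1) / 5" using sum_bound1 assms(3) by blast
    thus ?thesis using 2
      by (simp add: harm_expand delta_const_def phi_const_def beta_def)
  next
    case 3
    have "?S \<le> harm (k - 1) / 5" using sum_bound1 assms(3) by blast
    thus ?thesis using 3
      by (simp add: harm_expand delta_const_def phi_const_def beta_def)
  next
    case 4
    have "?S \<le> harm (k - 1) / 5" using sum_bound1 assms(3) by blast
    moreover have "- real (k - 1) * delta_const + harm (k - 1) / 5 + harm (k - 1 + 2)
        \<le> phi_const - beta (k - 1 + 1)" using 4 big_k[of "k - 1"] by simp
    moreover have "k - 1 + 2 = k + 1" "k - 1 + 1 = k" "real (k - 1) = real k - 1" using 4 by auto
    ultimately show ?thesis by simp
  next
    case 5
    show ?thesis
    proof (cases "d \<ge> 13")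
      case True
      have "?S \<le> (real k - 1) / 13" using sum_bound2 True k1 by blast
      moreover have "k = 3 \<or> k = 4 \<or> k = 5 \<or> k = 6" using 5 by linarith
      ultimately show ?thesis
        by (auto simp: harm_expand delta_const_def phi_const_def beta_def)
    next
      case False
      have "k = 3 \<or> k = 4 \<or> k = 5 \<or> k = 6" using 5 by linarith
      show ?thesis using small_case[of d k] 5 assms(3) False by simp
    qed
  qed
qed

end
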